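(* Suppose the path decomposition $P_0,\dots,P_k$ of $G$ is well defined (i.e. the uniqueness assumptions below hold). Then there is an index $i_0\le k$ such that $f(P_0)>f(P_1)>\dots>f(P_{i_0})>0=f(P_{i_0+1})=\dots=f(P_k)$.
   Context: Let $G=(N,E)$ be a finite connected undirected graph with distinct vertices $s_0,s_1$ and edge lengths $L_e>0$; the length $L(P)$ of a path is the sum of its edge lengths, and $\operatorname{dist}(v,s_1)$ is the shortest-path distance. Path decomposition: $P_0$ is the shortest $s_0$-$s_1$ path (assumed unique), $f(P_0)=1$, and $p^*_v=\operatorname{dist}(v,s_1)$ for $v\in P_0$. Inductively, for $i\ge1$, as long as some edge does not belong to $P_0\cup\dots\cup P_{i-1}$, let $\mathcal P$ be the set of paths $P$ in $G$ whose startpoint $a$ and endpoint $b$ lie on $P_0\cup\dots\cup P_{i-1}$ with $p^*_a\ge p^*_b$, none of whose interior vertices lies on $P_0\cup\dots\cup P_{i-1}$, and none of whose edges belongs to $P_0\cup\dots\cup P_{i-1}$; for such $P$ set $f(P)=(p^*_a-p^*_b)/L(P)$. Let $P_i=\arg\max_{P\in\mathcal P}f(P)$ (assumed unique unless the maximum value is $0$). If $p^*_a>p^*_b$, $P_i$ is directed from $a$ to $b$; otherwise its edges stay undirected. For every interior vertex $v$ of $P_i$ set $p^*_v=p^*_b+f(P_i)\operatorname{dist}_{P_i}(v,b)$, where $\operatorname{dist}_{P_i}$ is distance along $P_i$; for edges $e$ of $P_i$ set $r_e=f(P_i)-1$ (and $r_e=0$ for $e\in P_0$). The process stops with $P_k$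 when all edges are covered. *)

theory Defs
  imports Main "HOL-Library.Multiset" Complex_Main
begin

definition wf_graph :: "'v set \<Rightarrow> 'e set \<Rightarrow> ('e \<Rightarrow> 'v set) \<Rightarrow> ('e \<Rightarrow> real) \<Rightarrow> bool" where
  "wf_graph N E ends L \<longleftrightarrow> finite N \<and> finite E \<and>
     (\<forall>e\<in>E. (\<exists>u v. u \<noteq> v \<and> ends e = {u, v}) \<and> ends e \<subseteq> N \<and> L e > 0)"

definition is_walk :: "'e set \<Rightarrow> ('e \<Rightarrow> 'v set) \<Rightarrow> 'v list \<Rightarrow> 'e list \<Rightarrow> bool" where
  "is_walk E ends vs es \<longleftrightarrow> length vs = Suc (length es) \<and>
     (\<forall>i < length es. es ! i \<in> E \<and> ends (es ! i) = {vs ! i, vs ! Suc i})"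

definition connected_graph :: "'v set \<Rightarrow> 'e set \<Rightarrow> ('e \<Rightarrow> 'v set) \<Rightarrow> bool" where
  "connected_graph N E ends \<longleftrightarrow>
     (\<forall>u\<in>N. \<forall>v\<in>N. \<exists>vs es. is_walk E ends vs es \<and> hd vs = u \<and> last vs = v)"

definition is_path :: "'e set \<Rightarrow> ('e \<Rightarrow> 'v set) \<Rightarrow> 'v list \<Rightarrow> 'e list \<Rightarrow> bool" where
  "is_path E ends vs es \<longleftrightarrow> is_walk E ends vs es \<and> es \<noteq> [] \<and> distinct es \<and>
     (distinct vs \<or> (distinct (tl vs) \<and> hd vs = last vs))"

definition plen :: "('e \<Rightarrow> real) \<Rightarrow> 'e list \<Rightarrow> real" where
  "plen L es = sum_list (map L es)"

definition gdist :: "'e set \<Rightarrow> ('e \<Rightarrow> 'v set) \<Rightarrow> ('e \<Rightarrow> real) \<Rightarrow> 'v \<Rightarrow> 'v \<Rightarrow> real" where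
  "gdist E ends L u v = Inf {plen L es | vs es. is_walk E ends vs es \<and> hd vs = u \<and> last vs = v}"

definition fval :: "('e \<Rightarrow> real) \<Rightarrow> ('v \<Rightarrow> real) \<Rightarrow> 'v list \<times> 'e list \<Rightarrow> real" where
  "fval L p P = (p (hd (fst P)) - p (last (fst P))) / plen L (snd P)"

definition covV :: "(nat \<Rightarrow> 'v list \<times> 'e list) \<Rightarrow> nat \<Rightarrow> 'v set" where
  "covV P i = (\<Union>j<i. set (fst (P j)))"

definition covE :: "(nat \<Rightarrow> 'v list \<times> 'e list) \<Rightarrow> nat \<Rightarrow> 'e set" where
  "covE P i = (\<Union>j<i. set (snd (P j)))"

definition cands :: "'e set \<Rightarrow> ('e \<Rightarrow> 'v set) \<Rightarrow> ('v \<Rightarrow> real) \<Rightarrow> (nat \<Rightarrow> 'v list \<times> 'e list)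
                     \<Rightarrow> nat \<Rightarrow> ('v list \<times> 'e list) set" where
  "cands E ends p P i = {(vs, es). is_path E ends vs es \<and>
      hd vs \<in> covV P i \<and> last vs \<in> covV P i \<and> p (hd vs) \<ge> p (last vs) \<and>
      (\<forall>j. 0 < j \<and> j < length es \<longrightarrow> vs ! j \<notin> covV P i) \<and>
      set es \<inter> covE P i = {}}"

text \<open>P_0,...,P_k is a well-defined path decomposition, with potential p
  (p v is the value p^*_v assigned during the process).\<close>
definition path_decomp :: "'v set \<Rightarrow> 'e set \<Rightarrow> ('e \<Rightarrow> 'v set) \<Rightarrow> ('e \<Rightarrow> real) \<Rightarrow> 'v \<Rightarrow> 'v \<Rightarrow>
      nat \<Rightarrow> (nat \<Rightarrow> 'v list \<times> 'e list) \<Rightarrow> ('v \<Rightarrow> real) \<Rightarrow> bool" where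
  "path_decomp N E ends L s0 s1 k P p \<longleftrightarrow>
     \<comment> \<open>P_0 is the unique shortest s0-s1 path\<close>
     (is_path E ends (fst (P 0)) (snd (P 0)) \<and> distinct (fst (P 0)) \<and>
      hd (fst (P 0)) = s0 \<and> last (fst (P 0)) = s1 \<and>
      plen L (snd (P 0)) = gdist E ends L s0 s1 \<and>
      (\<forall>vs es. is_path E ends vs es \<and> hd vs = s0 \<and> last vs = s1 \<and>
          plen L es = gdist E ends L s0 s1 \<longrightarrow> (vs, es) = P 0) \<and>
      (\<forall>v\<in>set (fst (P 0)). p v = gdist E ends L v s1)) \<and>
     \<comment> \<open>inductive steps\<close>
     (\<forall>i. 1 \<le> i \<and> i \<le> k \<longrightarrow>
        E - covE P i \<noteq> {} \<and>
        P i \<in> cands E ends p P i \<and>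
        (\<forall>Q\<in>cands E ends p P i. fval L p Q \<le> fval L p (P i)) \<and>
        (fval L p (P i) \<noteq> 0 \<longrightarrow>
           (\<forall>Q\<in>cands E ends p P i. fval L p Q = fval L p (P i) \<longrightarrow> Q = P i)) \<and>
        (\<forall>j. 0 < j \<and> j < length (snd (P i)) \<longrightarrow>
           p (fst (P i) ! j) = p (last (fst (P i))) +
              fval L p (P i) * plen L (drop j (snd (P i))))) \<and>
     \<comment> \<open>the process stops with P_k: all edges covered\<close>
     E \<subseteq> covE P (Suc k)"

end

theory Submission
  imports Defs
begin

lemma plen_append[simp]: "plen L (xs @ ys) = plen L xs + plen L ys" by (simp add: plen_def)
lemma plen_Nil[simp]: "plen L [] = 0" by (simp add: plen_def)
lemma plen_Cons[simp]: "plen L (x # xs) = L x + plen L xs" by (simp add: plen_def)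

lemma plen_nonneg: "\<forall>e\<in>set es. L e > 0 \<Longrightarrow> plen L es \<ge> 0"
  by (induct es) (auto simp: add_nonneg_nonneg less_imp_le)

lemma plen_pos: "\<forall>e\<in>set es. L e > 0 \<Longrightarrow> es \<noteq> [] \<Longrightarrow> plen L es > 0"
proof (induct es)
  case (Cons a es) then show ?case using plen_nonneg[of es L] by (simp add: add_pos_nonneg)
qed simp

lemma plen_take_drop: "plen L es = plen L (take m es) + plen L (drop m es)"
  by (metis append_take_drop_id plen_append)

lemma plen_drop_mono: assumes "\<forall>e\<in>set es. L e > 0" "m \<le> m'"
  shows "plen L (drop m' es) \<le> plen L (drop m es)"
proof -
  have d: "drop m' es = drop (m'-m) (drop m es)" using assms(2) by simp
  have "plen L (drop m es) = plen L (take (m'-m) (drop m es)) + plen L (drop m' es)"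
    unfolding d by (rule plen_take_drop)
  moreover have "plen L (take (m'-m) (drop m es)) \<ge> 0"
    using assms(1) by (intro plen_nonneg) (meson in_set_dropD in_set_takeD)
  ultimately show ?thesis by linarith
qed

lemma plen_drop_pos: "\<forall>e\<in>set es. L e > 0 \<Longrightarrow> m < length es \<Longrightarrow> plen L (drop m es) > 0"
  by (intro plen_pos) (auto dest: in_set_dropD)

lemma plen_drop_lt: assumes "\<forall>e\<in>set es. L e > 0" "0 < m" "es \<noteq> []"
  shows "plen L (drop m es) < plen L es"
proof -
  have "plen L (take m es) > 0" using assms by (intro plen_pos) (auto dest: in_set_takeD)
  then show ?thesis using plen_take_drop[of L es m] by linarith
qed

lemma walk_set: "is_walk E ends vs es \<Longrightarrow> set es \<subseteq> E"
  by (auto simp: is_walk_def in_set_conv_nth)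

lemma walk_ne: "is_walk E ends vs es \<Longrightarrow> vs \<noteq> []"
  by (auto simp: is_walk_def)

lemma walk_last: assumes "is_walk E ends vs es" shows "last vs = vs ! length es"
proof -
  have "length vs = Suc (length es)" using assms by (simp add: is_walk_def)
  then show ?thesis by (metis diff_Suc_1 last_conv_nth list.size(3) nat.simps(3))
qed

lemma walk_hd: assumes "is_walk E ends vs es" shows "hd vs = vs ! 0"
proof -
  have "length vs = Suc (length es)" using assms by (simp add: is_walk_def)
  then show ?thesis by (metis hd_conv_nth list.size(3) nat.simps(3))
qed

lemma hd_butlast_app: "xs \<noteq> [] \<Longrightarrow> ys \<noteq> [] \<Longrightarrow> last xs = hd ys \<Longrightarrow> hd (butlast xs @ ys) = hd xs"
  by (induct xs) auto

lemma walk_app: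
  assumes w1: "is_walk E ends vs1 es1" and w2: "is_walk E ends vs2 es2" and j: "last vs1 = hd vs2"
  shows "is_walk E ends (butlast vs1 @ vs2) (es1 @ es2)"
proof -
  have l1: "length vs1 = Suc (length es1)" and l2: "length vs2 = Suc (length es2)"
    using w1 w2 by (auto simp: is_walk_def)
  have lb: "length (butlast vs1) = length es1" using l1 by simp
  have jn: "vs1 ! length es1 = vs2 ! 0" using j walk_last[OF w1] walk_hd[OF w2] by simp
  have "length (butlast vs1 @ vs2) = Suc (length (es1 @ es2))" using lb l2 by simp
  moreover have "\<forall>i < length (es1 @ es2). (es1 @ es2) ! i \<in> E \<and> ends ((es1 @ es2) ! i) = {(butlast vs1 @ vs2) ! i, (butlast vs1 @ vs2) ! Suc i}"
  proof (intro allI impI)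
    fix i assume i: "i < length (es1 @ es2)"
    show "(es1 @ es2) ! i \<in> E \<and> ends ((es1 @ es2) ! i) = {(butlast vs1 @ vs2) ! i, (butlast vs1 @ vs2) ! Suc i}"
    proof (cases "i < length es1")
      case True
      have a: "(butlast vs1 @ vs2) ! i = vs1 ! i" using True lb by (simp add: nth_append nth_butlast)
      have b: "(butlast vs1 @ vs2) ! Suc i = vs1 ! Suc i"
      proof (cases "Suc i < length es1")
        case True then show ?thesis using lb by (simp add: nth_append nth_butlast)
      next
        case False then have "Suc i = length es1" using \<open>i < length es1\<close> by simp
        then show ?thesis using lb jn by (simp add: nth_append)
      qed
      show ?thesis using w1 True a b by (simp add: is_walk_def nth_append)
    next
      case False
      then have "i - length es1 < length es2" using i by simp
      moreover have "(butlast vs1 @ vs2) ! i = vs2 ! (i - length es1)"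
        "(butlast vs1 @ vs2) ! Suc i = vs2 ! Suc (i - length es1)"
        using False lb by (simp_all add: nth_append Suc_diff_le)
      ultimately show ?thesis using w2 False by (simp add: is_walk_def nth_append)
    qed
  qed
  ultimately show ?thesis unfolding is_walk_def by blast
qed

lemma walk_take: "is_walk E ends vs es \<Longrightarrow> j \<le> length es \<Longrightarrow> is_walk E ends (take (Suc j) vs) (take j es)"
  by (auto simp: is_walk_def)

lemma walk_drop: "is_walk E ends vs es \<Longrightarrow> l \<le> length es \<Longrightarrow> is_walk E ends (drop l vs) (drop l es)"
  by (auto simp: is_walk_def add.commute)

lemma walk_distinct_es: assumes w: "is_walk E ends vs es" and d: "distinct vs" shows "distinct es"
  unfolding distinct_conv_nth
proof (intro allI impI)
  fix i j assume i: "i < length es" and j: "j < length es" and ij: "i \<noteq> j"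
  show "es ! i \<noteq> es ! j"
  proof
    assume e: "es ! i = es ! j"
    have l: "length vs = Suc (length es)" using w by (simp add: is_walk_def)
    have "{vs ! i, vs ! Suc i} = {vs ! j, vs ! Suc j}" using w i j e unfolding is_walk_def by metis
    then have "vs ! i = vs ! j \<and> vs ! Suc i = vs ! Suc j \<or> vs ! i = vs ! Suc j \<and> vs ! Suc i = vs ! j"
      by (auto simp: doubleton_eq_iff)
    then show False using d l i j ij by (auto simp: nth_eq_iff_index_eq)
  qed
qed

lemma path_walk: "is_path E ends vs es \<Longrightarrow> is_walk E ends vs es" by (simp add: is_path_def)

lemma path_distinct_tl: "is_path E ends vs es \<Longrightarrow> distinct (tl vs)"
  by (auto simp: is_path_def distinct_tl)

lemma path_distinct_ne: "is_path E ends vs es \<Longrightarrow> hd vs \<noteq> last vs \<Longrightarrow> distinct vs"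
  by (auto simp: is_path_def)

lemma path_distinct_take: assumes pa: "is_path E ends vs es" shows "distinct (take (length es) vs)"
proof (cases "distinct vs")
  case True then show ?thesis by simp
next
  case False
  then have dt: "distinct (tl vs)" and hl: "hd vs = last vs" using pa by (auto simp: is_path_def)
  have l: "length vs = Suc (length es)" and ne: "es \<noteq> []" using pa by (auto simp: is_path_def is_walk_def)
  obtain x ys where vs: "vs = x # ys" using l by (cases vs) auto
  have ly: "length ys = length es" using l vs by simp
  have yne: "ys \<noteq> []" using ly ne by auto
  have x: "x = last ys" using hl vs yne by simp
  have dy: "distinct ys" using dt vs by simp
  have "ys = butlast ys @ [last ys]" using yne by simp
  then have "distinct (butlast ys) \<and> last ys \<notin> set (butlast ys)" using dy
    by (metis distinct_append distinct_butlast not_distinct_conv_prefix)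
  moreover have "take (length es) vs = x # butlast ys" using vs ly yne ne
    by (simp add: butlast_conv_take take_Cons')
  ultimately show ?thesis using x by simp
qed



lemma combine:
  fixes p :: "'v \<Rightarrow> real"
  assumes wp: "is_walk E ends pv pe" and wq: "is_walk E ends qv qe" and ws: "is_walk E ends sv se"
   and j1: "last pv = hd qv" and j2: "last qv = hd sv" and qne: "qe \<noteq> []"
   and dp: "distinct pv" and dq: "distinct qv" and ds: "distinct sv"
   and p1: "\<forall>v\<in>set pv. p (hd qv) \<le> p v"
   and q1: "\<forall>v\<in>set (tl qv). p v < p (hd qv)"
   and q2: "\<forall>v\<in>set (butlast qv). p (last qv) < p v"
   and s1: "\<forall>v\<in>set sv. p v \<le> p (last qv)"
   and ab: "p (last qv) < p (hd qv)"
  shows "is_path E ends (butlast pv @ butlast qv @ sv) (pe @ qe @ se)"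
    "hd (butlast pv @ butlast qv @ sv) = hd pv" "last (butlast pv @ butlast qv @ sv) = last sv"
    "set (butlast pv @ butlast qv @ sv) \<subseteq> set pv \<union> set qv \<union> set sv"
proof -
  have pne: "pv \<noteq> []" and qvne: "qv \<noteq> []" and sne: "sv \<noteq> []" using wp wq ws walk_ne by blast+
  have w1: "is_walk E ends (butlast qv @ sv) (qe @ se)" by (rule walk_app[OF wq ws j2])
  have h1: "hd (butlast qv @ sv) = hd qv" using hd_butlast_app[OF qvne sne j2] .
  have w2: "is_walk E ends (butlast pv @ butlast qv @ sv) (pe @ qe @ se)"
    using walk_app[OF wp w1] j1 h1 by simp
  show "hd (butlast pv @ butlast qv @ sv) = hd pv"
    using hd_butlast_app[OF pne _ ] j1 h1 sne by simp
  show "last (butlast pv @ butlast qv @ sv) = last sv" using sne by simp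
  show "set (butlast pv @ butlast qv @ sv) \<subseteq> set pv \<union> set qv \<union> set sv"
    by (auto dest: in_set_butlastD)
  have d1: "set (butlast qv) \<inter> set sv = {}" proof (rule ccontr) assume "set (butlast qv) \<inter> set sv \<noteq> {}" then obtain x where "x \<in> set (butlast qv)" "x \<in> set sv" by auto then show False using q2 s1 by fastforce qed
  have lastnot: "last pv \<notin> set (butlast pv)" using dp pne
    by (metis append_butlast_last_id distinct_append disjoint_iff list.set_intros(1) set_append)
  have d2: "set (butlast pv) \<inter> set (butlast qv @ sv) = {}"
  proof (rule ccontr)
    assume "set (butlast pv) \<inter> set (butlast qv @ sv) \<noteq> {}"
    then obtain x where xp: "x \<in> set (butlast pv)" and xq: "x \<in> set (butlast qv) \<or> x \<in> set sv" by auto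
    have "x \<noteq> hd qv" using xp lastnot j1 by auto
    have px: "p (hd qv) \<le> p x" using p1 xp by (auto dest: in_set_butlastD)
    show False using xq
    proof
      assume "x \<in> set (butlast qv)"
      then have "x \<in> set qv" by (rule in_set_butlastD)
      then have "x \<in> set (tl qv)" using \<open>x \<noteq> hd qv\<close> qvne by (cases qv) auto
      then show False using q1 px by force
    next
      assume "x \<in> set sv" then show False using s1 px ab by force
    qed
  qed
  have dv: "distinct (butlast pv @ butlast qv @ sv)"
    using d1 d2 dp dq ds by (simp add: distinct_butlast)
  show "is_path E ends (butlast pv @ butlast qv @ sv) (pe @ qe @ se)"
    unfolding is_path_def using w2 dv walk_distinct_es[OF w2 dv] qne by simp
qed

locale PD =
  fixes N :: "'v set" and E :: "'e set" and ends :: "'e \<Rightarrow> 'v set" and L :: "'e \<Rightarrow> real"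
    and s0 s1 :: 'v and k :: nat and P :: "nat \<Rightarrow> 'v list \<times> 'e list" and p :: "'v \<Rightarrow> real"
  assumes wf: "wf_graph N E ends L" and pd: "path_decomp N E ends L s0 s1 k P p"
begin

lemma Lpos: "e \<in> E \<Longrightarrow> L e > 0" using wf by (auto simp: wf_graph_def)
lemma walk_pos: "is_walk E ends vs es \<Longrightarrow> \<forall>e\<in>set es. L e > 0" using walk_set Lpos by blast

lemma P0: "is_path E ends (fst (P 0)) (snd (P 0))" "distinct (fst (P 0))" "hd (fst (P 0)) = s0"
  "last (fst (P 0)) = s1" "plen L (snd (P 0)) = gdist E ends L s0 s1"
  "\<And>vs es. is_path E ends vs es \<Longrightarrow> hd vs = s0 \<Longrightarrow> last vs = s1 \<Longrightarrow> plen L es = gdist E ends L s0 s1 \<Longrightarrow> (vs, es) = P 0"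
  "\<And>v. v \<in> set (fst (P 0)) \<Longrightarrow> p v = gdist E ends L v s1"
  using pd unfolding path_decomp_def by blast+

lemma Pi: assumes "1 \<le> i" "i \<le> k"
  shows "P i \<in> cands E ends p P i" "\<And>Q. Q \<in> cands E ends p P i \<Longrightarrow> fval L p Q \<le> fval L p (P i)"
   "\<And>Q. fval L p (P i) \<noteq> 0 \<Longrightarrow> Q \<in> cands E ends p P i \<Longrightarrow> fval L p Q = fval L p (P i) \<Longrightarrow> Q = P i"
   "\<And>j. 0 < j \<Longrightarrow> j < length (snd (P i)) \<Longrightarrow> p (fst (P i) ! j) = p (last (fst (P i))) + fval L p (P i) * plen L (drop j (snd (P i)))"
  using pd assms unfolding path_decomp_def by blast+

lemma cover: "E \<subseteq> covE P (Suc k)" using pd unfolding path_decomp_def by blast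

lemma cands_D: assumes "Q \<in> cands E ends p P i"
  shows "is_path E ends (fst Q) (snd Q)" "hd (fst Q) \<in> covV P i" "last (fst Q) \<in> covV P i"
    "p (last (fst Q)) \<le> p (hd (fst Q))" "\<And>j. 0 < j \<Longrightarrow> j < length (snd Q) \<Longrightarrow> fst Q ! j \<notin> covV P i"
    "set (snd Q) \<inter> covE P i = {}"
  using assms by (cases Q; simp add: cands_def)+

lemma gdist_le: assumes w: "is_walk E ends vs es" shows "gdist E ends L (hd vs) (last vs) \<le> plen L es"
  unfolding gdist_def
proof (rule cInf_lower)
  show "plen L es \<in> {plen L es |vs' es. is_walk E ends vs' es \<and> hd vs' = hd vs \<and> last vs' = last vs}"
    using w by blast
  show "bdd_below {plen L es |vs' es. is_walk E ends vs' es \<and> hd vs' = hd vs \<and> last vs' = last vs}"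
    by (rule bdd_belowI[of _ 0]) (auto intro: plen_nonneg dest: walk_pos)
qed

lemma gdist_tri: assumes w: "is_walk E ends vs es" and w2: "is_walk E ends ws fs" and j: "hd ws = last vs"
  shows "gdist E ends L (hd vs) (last ws) \<le> plen L es + gdist E ends L (hd ws) (last ws)"
proof -
  let ?S = "{plen L es |vs' es. is_walk E ends vs' es \<and> hd vs' = hd ws \<and> last vs' = last ws}"
  have "gdist E ends L (hd vs) (last ws) - plen L es \<le> Inf ?S"
  proof (rule cInf_greatest)
    show "?S \<noteq> {}" using w2 by blast
    fix x assume "x \<in> ?S"
    then obtain vs' es' where x: "x = plen L es'" and w': "is_walk E ends vs' es'" and h: "hd vs' = hd ws"
      and l: "last vs' = last ws" by blast
    have wa: "is_walk E ends (butlast vs @ vs') (es @ es')" using walk_app[OF w w'] h j by simp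
    have "hd (butlast vs @ vs') = hd vs" using hd_butlast_app[of vs vs'] walk_ne[OF w] walk_ne[OF w'] h j by simp
    moreover have "last (butlast vs @ vs') = last ws" using walk_ne[OF w'] l by simp
    ultimately have "gdist E ends L (hd vs) (last ws) \<le> plen L (es @ es')" using gdist_le[OF wa] by simp
    then show "gdist E ends L (hd vs) (last ws) - plen L es \<le> x" using x by simp
  qed
  then show ?thesis unfolding gdist_def by linarith
qed

end

lemma hd_take_Suc: "hd (take (Suc j) xs) = hd xs" by (cases xs) auto

context PD begin

abbreviation "VS i \<equiv> fst (P i)"
abbreviation "ES i \<equiv> snd (P i)"
abbreviation "F i \<equiv> fval L p (P i)"

lemma path_i: assumes "i \<le> k" shows "is_path E ends (VS i) (ES i)"
proof (cases "i = 0")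
  case True then show ?thesis using P0(1) by (simp only:)
next
  case False then have "1 \<le> i" by simp
  show ?thesis using cands_D(1)[OF Pi(1)[OF \<open>1 \<le> i\<close> assms]] by simp
qed

lemma walk_i: assumes "i \<le> k" shows "is_walk E ends (VS i) (ES i)"
  using path_walk[OF path_i[OF assms]] .

lemma pos_i: assumes "i \<le> k" shows "\<forall>e\<in>set (ES i). L e > 0"
  using walk_pos[OF walk_i[OF assms]] .

lemma ne_i: assumes "i \<le> k" shows "ES i \<noteq> []"
  using path_i[OF assms] unfolding is_path_def by blast

lemma plen_i: assumes "i \<le> k" shows "plen L (ES i) > 0"
  using plen_pos[OF pos_i[OF assms] ne_i[OF assms]] .

lemma len_i: assumes "i \<le> k" shows "length (VS i) = Suc (length (ES i))"
  using walk_i[OF assms] unfolding is_walk_def by blast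

lemma lin0: assumes j: "j \<le> length (ES 0)" shows "p (VS 0 ! j) = plen L (drop j (ES 0))"
proof -
  have w: "is_walk E ends (VS 0) (ES 0)" using walk_i[OF le0] .
  have l: "length (VS 0) = Suc (length (ES 0))" using len_i[OF le0] .
  have jl: "j < length (VS 0)" using j l by simp
  have pv: "p (VS 0 ! j) = gdist E ends L (VS 0 ! j) s1" using P0(7) jl by simp
  have wd: "is_walk E ends (drop j (VS 0)) (drop j (ES 0))" using walk_drop[OF w j] .
  have hd: "hd (drop j (VS 0)) = VS 0 ! j" using jl by (simp add: hd_drop_conv_nth)
  have ld: "last (drop j (VS 0)) = s1" using jl P0(4) by (simp add: last_drop)
  have le1: "gdist E ends L (VS 0 ! j) s1 \<le> plen L (drop j (ES 0))" using gdist_le[OF wd] hd ld by simp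
  have wt: "is_walk E ends (take (Suc j) (VS 0)) (take j (ES 0))" using walk_take[OF w j] .
  have "hd (take (Suc j) (VS 0)) = hd (VS 0)" by (rule hd_take_Suc)
  then have ht: "hd (take (Suc j) (VS 0)) = s0" using P0(3) by simp
  have lt: "last (take (Suc j) (VS 0)) = VS 0 ! j" using jl by (simp add: take_Suc_conv_app_nth)
  have "gdist E ends L s0 s1 \<le> plen L (take j (ES 0)) + gdist E ends L (VS 0 ! j) s1"
    using gdist_tri[OF wt wd] ht lt hd ld by simp
  moreover have "plen L (ES 0) = plen L (take j (ES 0)) + plen L (drop j (ES 0))"
    by (rule plen_take_drop)
  ultimately show ?thesis using pv le1 P0(5) by linarith
qed

lemma hd_nth: assumes "i \<le> k" shows "hd (VS i) = VS i ! 0" using walk_hd[OF walk_i[OF assms]] .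
lemma last_nth: assumes "i \<le> k" shows "last (VS i) = VS i ! length (ES i)" using walk_last[OF walk_i[OF assms]] .

lemma F0: "F 0 = 1"
proof -
  have "p (hd (VS 0)) = plen L (ES 0)" using lin0[of 0] hd_nth[OF le0] by simp
  moreover have "p (last (VS 0)) = 0" using lin0[of "length (ES 0)"] last_nth[OF le0] by simp
  ultimately show ?thesis using plen_i[OF le0] by (simp add: fval_def)
qed

lemma lin: assumes i: "i \<le> k" and j: "j \<le> length (ES i)"
  shows "p (VS i ! j) = p (last (VS i)) + F i * plen L (drop j (ES i))"
proof (cases "i = 0")
  case True
  have a: "p (VS 0 ! j) = plen L (drop j (ES 0))" using lin0 j True by blast
  have b: "p (last (VS 0)) = 0" using lin0[of "length (ES 0)"] last_nth[OF le0] by simp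
  show ?thesis using a b F0 True by simp
next
  case False
  then have i1: "1 \<le> i" by simp
  show ?thesis
  proof (cases "j = 0")
    case True
    have pp: "plen L (ES i) > 0" using plen_i[OF i] .
    have "F i * plen L (ES i) = p (hd (VS i)) - p (last (VS i))"
      using pp unfolding fval_def by simp
    moreover have "VS i ! j = hd (VS i)" using True hd_nth[OF i] by simp
    ultimately show ?thesis using True by simp
  next
    case False
    show ?thesis
    proof (cases "j = length (ES i)")
      case True
      have "VS i ! j = last (VS i)" using True last_nth[OF i] by simp
      then show ?thesis using True by simp
    next
      case False
      then have "j < length (ES i)" using j by simp
      then show ?thesis using Pi(4)[OF i1 i, of j] \<open>j \<noteq> 0\<close> by simp
    qed
  qed
qed

lemma F_nonneg: assumes i: "i \<le> k" shows "0 \<le> F i"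
proof (cases "i = 0")
  case True then show ?thesis using F0 by simp
next
  case False
  then have "1 \<le> i" by simp
  then have "p (last (VS i)) \<le> p (hd (VS i))" using cands_D(4)[OF Pi(1)[OF _ i]] by simp
  moreover have "plen L (ES i) > 0" using plen_i[OF i] .
  ultimately show ?thesis unfolding fval_def by (intro divide_nonneg_pos) auto
qed

lemma covV_Suc: "covV P (Suc i) = covV P i \<union> set (VS i)"
  by (auto simp: covV_def lessThan_Suc)
lemma covE_Suc: "covE P (Suc i) = covE P i \<union> set (ES i)"
  by (auto simp: covE_def lessThan_Suc)
lemma covV_0: "covV P 0 = {}" by (simp add: covV_def)

lemma hd_cov: "1 \<le> i \<Longrightarrow> i \<le> k \<Longrightarrow> hd (VS i) \<in> covV P i"
  by (rule cands_D(2)[OF Pi(1)])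
lemma last_cov: "1 \<le> i \<Longrightarrow> i \<le> k \<Longrightarrow> last (VS i) \<in> covV P i"
  by (rule cands_D(3)[OF Pi(1)])
lemma interior: "1 \<le> i \<Longrightarrow> i \<le> k \<Longrightarrow> 0 < j \<Longrightarrow> j < length (ES i) \<Longrightarrow> VS i ! j \<notin> covV P i"
  by (rule cands_D(5)[OF Pi(1)])

end


context PD begin

lemma cands_I: "is_path E ends vs es \<Longrightarrow> hd vs \<in> covV P i \<Longrightarrow> last vs \<in> covV P i \<Longrightarrow>
  p (last vs) \<le> p (hd vs) \<Longrightarrow> (\<And>j. 0 < j \<Longrightarrow> j < length es \<Longrightarrow> vs ! j \<notin> covV P i) \<Longrightarrow>
  set es \<inter> covE P i = {} \<Longrightarrow> (vs, es) \<in> cands E ends p P i"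
  unfolding cands_def by blast

lemma pre_piece: assumes i: "i \<le> k" and a: "a \<in> set (VS i)" and na: "1 \<le> i \<Longrightarrow> a \<notin> covV P i"
  shows "\<exists>pv pe. is_walk E ends pv pe \<and> hd pv = hd (VS i) \<and> last pv = a \<and> distinct pv \<and>
     (\<forall>v\<in>set pv. p a \<le> p v) \<and> p (hd (VS i)) - p a = F i * plen L pe \<and> set pe \<subseteq> set (ES i) \<and>
     (\<forall>v\<in>set pv. v \<in> covV P i \<longrightarrow> v = hd (VS i))"
proof -
  have l: "length (VS i) = Suc (length (ES i))" using len_i[OF i] .
  obtain j where jl: "j < length (VS i)" and aj: "a = VS i ! j" using a by (auto simp: in_set_conv_nth)
  have jn: "j \<le> length (ES i)" using jl l by simp
  have jn1: "j < length (ES i)" if "1 \<le> i"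
  proof (rule ccontr)
    assume "\<not> j < length (ES i)"
    then have "a = last (VS i)" using jn aj last_nth[OF i] by simp
    then show False using na[OF that] last_cov[OF that i] by simp
  qed
  define pv where "pv = take (Suc j) (VS i)"
  define pe where "pe = take j (ES i)"
  have w: "is_walk E ends pv pe" unfolding pv_def pe_def using walk_take[OF walk_i[OF i] jn] .
  have h: "hd pv = hd (VS i)" unfolding pv_def by (rule hd_take_Suc)
  have la: "last pv = a" unfolding pv_def using jl aj by (simp add: take_Suc_conv_app_nth)
  have nth: "\<exists>m\<le>j. v = VS i ! m" if "v \<in> set pv" for v
  proof -
    from that have "\<exists>m<length pv. pv ! m = v" by (simp only: in_set_conv_nth)
    then obtain m where m1: "m < length pv" and m2: "v = pv ! m" by blast
    have m3: "m < Suc j" using m1 unfolding pv_def by simp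
    have "v = VS i ! m" using m2 m3 unfolding pv_def by simp
    then show ?thesis using m3 less_Suc_eq_le by blast
  qed
  have d: "distinct pv"
  proof (cases "i = 0")
    case True then show ?thesis unfolding pv_def using P0(2) by simp
  next
    case False
    then have "j < length (ES i)" using jn1 by simp
    then have "pv = take (Suc j) (take (length (ES i)) (VS i))" unfolding pv_def by (simp add: min_def)
    moreover have "distinct (take (Suc j) (take (length (ES i)) (VS i)))"
      by (rule distinct_take[OF path_distinct_take[OF path_i[OF i]]])
    ultimately show ?thesis by (simp only:)
  qed
  have pot: "\<forall>v\<in>set pv. p a \<le> p v"
  proof
    fix v assume "v \<in> set pv"
    then obtain m where m: "m \<le> j" "v = VS i ! m" using nth by blast
    have "plen L (drop j (ES i)) \<le> plen L (drop m (ES i))" using plen_drop_mono[OF pos_i[OF i] m(1)] .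
    then have "F i * plen L (drop j (ES i)) \<le> F i * plen L (drop m (ES i))"
      using F_nonneg[OF i] by (rule mult_left_mono)
    then show "p a \<le> p v" using lin[OF i jn] lin[OF i, of m] m jn aj by simp
  qed
  have dd: "p (hd (VS i)) - p a = F i * plen L pe"
  proof -
    have "p (hd (VS i)) = p (last (VS i)) + F i * plen L (ES i)" using lin[OF i, of 0] hd_nth[OF i] by simp
    moreover have "p a = p (last (VS i)) + F i * plen L (drop j (ES i))" using lin[OF i jn] aj by simp
    moreover have "plen L (ES i) = plen L pe + plen L (drop j (ES i))" unfolding pe_def by (rule plen_take_drop)
    ultimately show ?thesis by (simp add: algebra_simps)
  qed
  have sub: "set pe \<subseteq> set (ES i)" unfolding pe_def by (rule set_take_subset)
  have cov: "\<forall>v\<in>set pv. v \<in> covV P i \<longrightarrow> v = hd (VS i)"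
  proof (intro ballI impI)
    fix v assume v: "v \<in> set pv" "v \<in> covV P i"
    then obtain m where m: "m \<le> j" "v = VS i ! m" using nth by blast
    show "v = hd (VS i)"
    proof (cases "m = 0")
      case True then show ?thesis using m hd_nth[OF i] by simp
    next
      case False
      show ?thesis
      proof (cases "i = 0")
        case True then show ?thesis using v covV_0 by simp
      next
        case False
        then have i1: "1 \<le> i" by simp
        have "m < length (ES i)" using jn1[OF i1] m by simp
        then have "VS i ! m \<notin> covV P i" using interior[OF i1 i] \<open>m \<noteq> 0\<close> by simp
        then show ?thesis using v m by simp
      qed
    qed
  qed
  show ?thesis
    apply (rule exI[of _ pv], rule exI[of _ pe])
    apply (intro conjI)
           apply (fact w)
          apply (fact h)
         apply (fact la)
        apply (fact d)
       apply (fact pot)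
      apply (fact dd)
     apply (fact sub)
    apply (fact cov)
    done
qed

lemma suf_piece: assumes i: "i \<le> k" and b: "b \<in> set (VS i)" and nb: "1 \<le> i \<Longrightarrow> b \<notin> covV P i"
  shows "\<exists>sv se. is_walk E ends sv se \<and> hd sv = b \<and> last sv = last (VS i) \<and> distinct sv \<and>
     (\<forall>v\<in>set sv. p v \<le> p b) \<and> p b - p (last (VS i)) = F i * plen L se \<and> set se \<subseteq> set (ES i) \<and>
     (\<forall>v\<in>set sv. v \<in> covV P i \<longrightarrow> v = last (VS i))"
proof -
  have l: "length (VS i) = Suc (length (ES i))" using len_i[OF i] .
  obtain j where jl: "j < length (VS i)" and bj: "b = VS i ! j" using b by (auto simp: in_set_conv_nth)
  have jn: "j \<le> length (ES i)" using jl l by simp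
  have jn1: "0 < j" if "1 \<le> i"
  proof (rule ccontr)
    assume "\<not> 0 < j"
    then have "b = hd (VS i)" using bj hd_nth[OF i] by simp
    then show False using nb[OF that] hd_cov[OF that i] by simp
  qed
  define sv where "sv = drop j (VS i)"
  define se where "se = drop j (ES i)"
  have w: "is_walk E ends sv se" unfolding sv_def se_def using walk_drop[OF walk_i[OF i] jn] .
  have h: "hd sv = b" unfolding sv_def using jl bj by (simp add: hd_drop_conv_nth)
  have la: "last sv = last (VS i)" unfolding sv_def using jl by (simp add: last_drop)
  have nth: "\<exists>m. j \<le> m \<and> m \<le> length (ES i) \<and> v = VS i ! m" if "v \<in> set sv" for v
  proof -
    from that have "\<exists>m<length sv. sv ! m = v" by (simp only: in_set_conv_nth)
    then obtain m where m1: "m < length sv" and m2: "v = sv ! m" by blast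
    have m3: "j + m < length (VS i)" using m1 unfolding sv_def by simp
    have "v = VS i ! (j + m)" using m2 jl unfolding sv_def by simp
    moreover have "j + m \<le> length (ES i)" using m3 l by simp
    ultimately show ?thesis by (intro exI[of _ "j + m"]) simp
  qed
  have d: "distinct sv"
  proof (cases "i = 0")
    case True then show ?thesis unfolding sv_def using P0(2) by simp
  next
    case False
    then have "0 < j" using jn1 by simp
    then have "sv = drop (Suc (j - 1)) (VS i)" unfolding sv_def by simp
    also have "\<dots> = drop (j - 1) (tl (VS i))" by (rule drop_Suc)
    finally have "sv = drop (j - 1) (tl (VS i))" .
    moreover have "distinct (drop (j - 1) (tl (VS i)))"
      by (rule distinct_drop[OF path_distinct_tl[OF path_i[OF i]]])
    ultimately show ?thesis by (simp only:)
  qed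
  have pot: "\<forall>v\<in>set sv. p v \<le> p b"
  proof
    fix v assume "v \<in> set sv"
    then obtain m where m: "j \<le> m" "m \<le> length (ES i)" "v = VS i ! m" using nth by blast
    have "plen L (drop m (ES i)) \<le> plen L (drop j (ES i))" using plen_drop_mono[OF pos_i[OF i] m(1)] .
    then have "F i * plen L (drop m (ES i)) \<le> F i * plen L (drop j (ES i))"
      using F_nonneg[OF i] by (rule mult_left_mono)
    then show "p v \<le> p b" using lin[OF i jn] lin[OF i m(2)] m bj by simp
  qed
  have dd: "p b - p (last (VS i)) = F i * plen L se" using lin[OF i jn] bj unfolding se_def by simp
  have sub: "set se \<subseteq> set (ES i)" unfolding se_def by (rule set_drop_subset)
  have cov: "\<forall>v\<in>set sv. v \<in> covV P i \<longrightarrow> v = last (VS i)"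
  proof (intro ballI impI)
    fix v assume v: "v \<in> set sv" "v \<in> covV P i"
    then obtain m where m: "j \<le> m" "m \<le> length (ES i)" "v = VS i ! m" using nth by blast
    show "v = last (VS i)"
    proof (cases "m = length (ES i)")
      case True then show ?thesis using m last_nth[OF i] by simp
    next
      case False
      show ?thesis
      proof (cases "i = 0")
        case True then show ?thesis using v covV_0 by simp
      next
        case False
        then have i1: "1 \<le> i" by simp
        have "0 < m" using jn1[OF i1] m(1) by linarith
        moreover have "m < length (ES i)" using m(2) \<open>m \<noteq> length (ES i)\<close> by linarith
        ultimately have "VS i ! m \<notin> covV P i" using interior[OF i1 i] by simp
        then show ?thesis using v m by simp
      qed
    qed
  qed
  show ?thesis
    apply (rule exI[of _ sv], rule exI[of _ se])
    apply (intro conjI)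
           apply (fact w)
          apply (fact h)
         apply (fact la)
        apply (fact d)
       apply (fact pot)
      apply (fact dd)
     apply (fact sub)
    apply (fact cov)
    done
qed

end


context PD begin

lemma step: assumes ik: "i < k" and le: "F i \<le> F (Suc i)" and fpos: "0 < F (Suc i)" shows False
proof -
  have ik': "i \<le> k" using ik by simp
  have sk: "Suc i \<le> k" using ik by simp
  have s1: "1 \<le> Suc i" by simp
  have cq: "P (Suc i) \<in> cands E ends p P (Suc i)" by (rule Pi(1)[OF s1 sk])
  define qv where "qv = VS (Suc i)"
  define qe where "qe = ES (Suc i)"
  define a where "a = hd qv"
  define b where "b = last qv"
  have qpath: "is_path E ends qv qe" unfolding qv_def qe_def by (rule path_i[OF sk])
  have qw: "is_walk E ends qv qe" unfolding qv_def qe_def by (rule walk_i[OF sk])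
  have qne: "qe \<noteq> []" unfolding qe_def by (rule ne_i[OF sk])
  have qpl: "plen L qe > 0" unfolding qe_def by (rule plen_i[OF sk])
  have qpos: "\<forall>e\<in>set qe. L e > 0" unfolding qe_def by (rule pos_i[OF sk])
  have ql: "length qv = Suc (length qe)" unfolding qv_def qe_def by (rule len_i[OF sk])
  have ab: "p a - p b = F (Suc i) * plen L qe"
    using qpl unfolding a_def b_def qv_def qe_def fval_def by simp
  have abl: "p b < p a" using ab fpos qpl by (smt (verit) mult_pos_pos)
  have dq: "distinct qv" using path_distinct_ne[OF qpath] abl unfolding a_def b_def by force
  have linq: "p (qv ! m) = p b + F (Suc i) * plen L (drop m qe)" if "m \<le> length qe" for m
    using lin[OF sk that[unfolded qe_def]] unfolding qv_def qe_def b_def by simp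
  have q1: "\<forall>v\<in>set (tl qv). p v < p a"
  proof
    fix v assume "v \<in> set (tl qv)"
    then have "\<exists>m<length (tl qv). tl qv ! m = v" by (simp only: in_set_conv_nth)
    then obtain m where m1: "m < length (tl qv)" and m2: "v = tl qv ! m" by blast
    have m3: "Suc m \<le> length qe" using m1 ql by simp
    have "v = qv ! Suc m" using m2 m1 ql by (simp add: nth_tl)
    then have "p v = p b + F (Suc i) * plen L (drop (Suc m) qe)" using linq[OF m3] by simp
    moreover have "plen L (drop (Suc m) qe) < plen L qe" by (rule plen_drop_lt[OF qpos _ qne]) simp
    ultimately show "p v < p a" using ab fpos by (smt (verit) mult_strict_left_mono)
  qed
  have q2: "\<forall>v\<in>set (butlast qv). p b < p v"
  proof
    fix v assume "v \<in> set (butlast qv)"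
    then have "\<exists>m<length (butlast qv). butlast qv ! m = v" by (simp only: in_set_conv_nth)
    then obtain m where m1: "m < length (butlast qv)" and m2: "v = butlast qv ! m" by blast
    have m3: "m < length qe" using m1 ql by simp
    have "v = qv ! m" using m2 m1 by (simp add: nth_butlast)
    then have "p v = p b + F (Suc i) * plen L (drop m qe)" using linq m3 by simp
    moreover have "plen L (drop m qe) > 0" by (rule plen_drop_pos[OF qpos m3])
    ultimately show "p b < p v" using fpos by (smt (verit) mult_pos_pos)
  qed
  have acov: "a \<in> covV P (Suc i)" unfolding a_def qv_def by (rule cands_D(2)[OF cq])
  have bcov: "b \<in> covV P (Suc i)" unfolding b_def qv_def by (rule cands_D(3)[OF cq])
  have qint: "qv ! j \<notin> covV P (Suc i)" if "0 < j" "j < length qe" for j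
    using cands_D(5)[OF cq that[unfolded qe_def]] unfolding qv_def .
  have qE: "set qe \<inter> covE P (Suc i) = {}" unfolding qe_def by (rule cands_D(6)[OF cq])
  have esub: "set (ES i) \<subseteq> covE P (Suc i)" unfolding covE_Suc by (rule Un_upper2)
  have vsub: "covV P i \<subseteq> covV P (Suc i)" unfolding covV_Suc by (rule Un_upper1)
  have esub2: "covE P i \<subseteq> covE P (Suc i)" unfolding covE_Suc by (rule Un_upper1)
  have nosame: False if "set qe \<subseteq> set (ES i)"
  proof -
    obtain e where "e \<in> set qe" using qne by (cases qe) auto
    then show False using that esub qE by blast
  qed
  show False
  proof (cases "1 \<le> i \<and> a \<in> covV P i \<and> b \<in> covV P i")
    case True
    then have i1: "1 \<le> i" and ac: "a \<in> covV P i" and bc: "b \<in> covV P i" by simp_all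
    have "(qv, qe) \<in> cands E ends p P i"
    proof (rule cands_I)
      show "is_path E ends qv qe" by (rule qpath)
      show "hd qv \<in> covV P i" using ac unfolding a_def .
      show "last qv \<in> covV P i" using bc unfolding b_def .
      show "p (last qv) \<le> p (hd qv)" using abl unfolding a_def b_def by simp
      show "qv ! j \<notin> covV P i" if "0 < j" "j < length qe" for j using qint[OF that] vsub by blast
      show "set qe \<inter> covE P i = {}" using qE esub2 by blast
    qed
    then have cqi: "P (Suc i) \<in> cands E ends p P i" unfolding qv_def qe_def by simp
    have "F (Suc i) \<le> F i" by (rule Pi(2)[OF i1 ik' cqi])
    then have eq: "F (Suc i) = F i" using le by simp
    have "F i \<noteq> 0" using eq fpos by simp
    then have "P (Suc i) = P i" using Pi(3)[OF i1 ik' _ cqi eq] by simp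
    then have "set qe \<subseteq> set (ES i)" unfolding qe_def by simp
    then show False by (rule nosame)
  next
    case False
    obtain pv pe u where pw: "is_walk E ends pv pe" and ph: "hd pv = u" and pl: "last pv = a"
      and pd: "distinct pv" and ppot: "\<forall>v\<in>set pv. p a \<le> p v" and pdd: "p u - p a = F i * plen L pe"
      and psub: "set pe \<subseteq> set (ES i)" and pcov: "\<forall>v\<in>set pv. v \<in> covV P i \<longrightarrow> v = u"
      and pu1: "1 \<le> i \<longrightarrow> u \<in> covV P i" and pu0: "i = 0 \<longrightarrow> u = s0"
    proof (cases "1 \<le> i \<and> a \<in> covV P i")
      case True
      show ?thesis
      proof (rule that[of "[a]" "[]" a])
        show "is_walk E ends [a] []" by (simp add: is_walk_def)
      qed (use True in \<open>simp_all\<close>)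
    next
      case False
      have aV: "a \<in> set (VS i)" using acov False unfolding covV_Suc by (cases "i = 0") (simp_all add: covV_0)
      have na: "1 \<le> i \<Longrightarrow> a \<notin> covV P i" using False by simp
      obtain pv pe where "is_walk E ends pv pe \<and> hd pv = hd (VS i) \<and> last pv = a \<and> distinct pv \<and>
       (\<forall>v\<in>set pv. p a \<le> p v) \<and> p (hd (VS i)) - p a = F i * plen L pe \<and> set pe \<subseteq> set (ES i) \<and>
       (\<forall>v\<in>set pv. v \<in> covV P i \<longrightarrow> v = hd (VS i))" using pre_piece[OF ik' aV na] by blast
      moreover have "1 \<le> i \<longrightarrow> hd (VS i) \<in> covV P i" using hd_cov[OF _ ik'] by blast
      moreover have "i = 0 \<longrightarrow> hd (VS i) = s0" using P0(3) by simp
      ultimately show ?thesis using that by blast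
    qed
    obtain sv se w where sw: "is_walk E ends sv se" and sh: "hd sv = b" and sl: "last sv = w"
      and sd: "distinct sv" and spot: "\<forall>v\<in>set sv. p v \<le> p b" and sdd: "p b - p w = F i * plen L se"
      and ssub: "set se \<subseteq> set (ES i)" and scov: "\<forall>v\<in>set sv. v \<in> covV P i \<longrightarrow> v = w"
      and sw1: "1 \<le> i \<longrightarrow> w \<in> covV P i" and sw0: "i = 0 \<longrightarrow> w = s1"
    proof (cases "1 \<le> i \<and> b \<in> covV P i")
      case True
      show ?thesis
      proof (rule that[of "[b]" "[]" b])
        show "is_walk E ends [b] []" by (simp add: is_walk_def)
      qed (use True in \<open>simp_all\<close>)
    next
      case False
      have bV: "b \<in> set (VS i)" using bcov False unfolding covV_Suc by (cases "i = 0") (simp_all add: covV_0)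
      have nb: "1 \<le> i \<Longrightarrow> b \<notin> covV P i" using False by simp
      obtain sv se where "is_walk E ends sv se \<and> hd sv = b \<and> last sv = last (VS i) \<and> distinct sv \<and>
       (\<forall>v\<in>set sv. p v \<le> p b) \<and> p b - p (last (VS i)) = F i * plen L se \<and> set se \<subseteq> set (ES i) \<and>
       (\<forall>v\<in>set sv. v \<in> covV P i \<longrightarrow> v = last (VS i))" using suf_piece[OF ik' bV nb] by blast
      moreover have "1 \<le> i \<longrightarrow> last (VS i) \<in> covV P i" using last_cov[OF _ ik'] by blast
      moreover have "i = 0 \<longrightarrow> last (VS i) = s1" using P0(4) by simp
      ultimately show ?thesis using that by blast
    qed
    have j1: "last pv = hd qv" using pl unfolding a_def .
    have j2: "last qv = hd sv" using sh unfolding b_def by simp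
    have p1: "\<forall>v\<in>set pv. p (hd qv) \<le> p v" using ppot unfolding a_def .
    have q1': "\<forall>v\<in>set (tl qv). p v < p (hd qv)" using q1 unfolding a_def .
    have q2': "\<forall>v\<in>set (butlast qv). p (last qv) < p v" using q2 unfolding b_def .
    have s1': "\<forall>v\<in>set sv. p v \<le> p (last qv)" using spot unfolding b_def .
    have ab': "p (last qv) < p (hd qv)" using abl unfolding a_def b_def .
    note comb = combine[OF pw qw sw j1 j2 qne pd dq sd p1 q1' q2' s1' ab']
    define cv where "cv = butlast pv @ butlast qv @ sv"
    define ce where "ce = pe @ qe @ se"
    have cpath: "is_path E ends cv ce" unfolding cv_def ce_def by (rule comb(1))
    have cw: "is_walk E ends cv ce" by (rule path_walk[OF cpath])
    have chd: "hd cv = u" unfolding cv_def using comb(2) ph by simp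
    have clast: "last cv = w" unfolding cv_def using comb(3) sl by simp
    have cset: "set cv \<subseteq> set pv \<union> set qv \<union> set sv" unfolding cv_def by (rule comb(4))
    have plC: "plen L ce = plen L pe + plen L qe + plen L se" unfolding ce_def by simp
    have pe0: "plen L pe \<ge> 0" by (rule plen_nonneg[OF walk_pos[OF pw]])
    have se0: "plen L se \<ge> 0" by (rule plen_nonneg[OF walk_pos[OF sw]])
    have Fi0: "F i \<ge> 0" by (rule F_nonneg[OF ik'])
    have dr: "p u - p w = F i * plen L pe + F (Suc i) * plen L qe + F i * plen L se"
    proof -
      have "p u - p w = (p u - p a) + (p a - p b) + (p b - p w)" by simp
      then show ?thesis using pdd ab sdd by simp
    qed
    have m1: "F i * plen L qe \<le> F (Suc i) * plen L qe" using le qpl by (intro mult_right_mono) simp_all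
    have D1: "F i * plen L ce \<le> p u - p w"
      using dr m1 plC by (simp add: distrib_left)
    have m2: "F i * plen L pe \<ge> 0" using Fi0 pe0 by simp
    have m3: "F i * plen L se \<ge> 0" using Fi0 se0 by simp
    have m4: "F (Suc i) * plen L qe > 0" using fpos qpl by simp
    have D2: "0 < p u - p w" using dr m2 m3 m4 by linarith
    have cne: "ce \<noteq> []" unfolding ce_def using qne by simp
    have cpl: "plen L ce > 0" by (rule plen_pos[OF walk_pos[OF cw] cne])
    have fval_C: "fval L p (cv, ce) = (p u - p w) / plen L ce" unfolding fval_def using chd clast by simp
    have fC: "F i \<le> fval L p (cv, ce)" unfolding fval_C using D1 cpl by (simp add: pos_le_divide_eq)
    have fCpos: "0 < fval L p (cv, ce)" unfolding fval_C using D2 cpl by simp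
    have qsubC: "set qe \<subseteq> set ce" unfolding ce_def by (simp add: Un_assoc[symmetric] le_supI1 sup.coboundedI2)
    show False
    proof (cases "i = 0")
      case True
      have u0: "u = s0" using pu0 True by simp
      have w0: "w = s1" using sw0 True by simp
      have "p (VS 0 ! 0) = p (last (VS 0)) + F 0 * plen L (drop 0 (ES 0))" by (rule lin[OF le0]) simp
      then have "p s0 - p s1 = plen L (ES 0)" using hd_nth[OF le0] P0(3) P0(4) F0 by simp
      then have "plen L ce \<le> plen L (ES 0)" using D1 True F0 u0 w0 by simp
      moreover have "gdist E ends L s0 s1 \<le> plen L ce" using gdist_le[OF cw] chd clast u0 w0 by simp
      ultimately have "plen L ce = gdist E ends L s0 s1" using P0(5) by linarith
      then have "(cv, ce) = P 0" using P0(6)[OF cpath] chd clast u0 w0 by simp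
      then have "set ce = set (ES i)" using True by (metis snd_conv)
      then show False using nosame qsubC by simp
    next
      case False
      then have i1: "1 \<le> i" by simp
      have ucov: "u \<in> covV P i" using pu1 i1 by simp
      have wcov: "w \<in> covV P i" using sw1 i1 by simp
      have uw: "u \<noteq> w" using D2 by auto
      have cd: "distinct cv" using path_distinct_ne[OF cpath] chd clast uw by simp
      have cl: "length cv = Suc (length ce)" using cw by (simp add: is_walk_def)
      have cv0: "cv ! 0 = u" using chd walk_hd[OF cw] by simp
      have cvn: "cv ! length ce = w" using clast walk_last[OF cw] by simp
      have aset: "a \<in> set pv" using pl walk_ne[OF pw] last_in_set by metis
      have bset: "b \<in> set sv" using sh walk_ne[OF sw] hd_in_set by metis
      have uw_cov: "v = u \<or> v = w" if vs: "v \<in> set cv" and vc: "v \<in> covV P i" for v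
      proof -
        have "v \<in> set pv \<or> v \<in> set qv \<or> v \<in> set sv" using vs cset by blast
        then show ?thesis
        proof (elim disjE)
          assume "v \<in> set pv" then show ?thesis using pcov vc by blast
        next
          assume "v \<in> set sv" then show ?thesis using scov vc by blast
        next
          assume "v \<in> set qv"
          then have "\<exists>m<length qv. qv ! m = v" by (simp only: in_set_conv_nth)
          then obtain m where mq: "m < length qv" and mv: "v = qv ! m" by blast
          show ?thesis
          proof (cases "m = 0")
            case True
            then have "v = a" using mv walk_hd[OF qw] unfolding a_def by simp
            then show ?thesis using pcov aset vc by blast
          next
            case False
            show ?thesis
            proof (cases "m = length qe")
              case True
              then have "v = b" using mv walk_last[OF qw] unfolding b_def by simp
              then show ?thesis using scov bset vc by blast
            next
              case False
              then have "m < length qe" using mq ql by simp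
              then have "v \<notin> covV P (Suc i)" using qint \<open>m \<noteq> 0\<close> mv by simp
              then show ?thesis using vc vsub by blast
            qed
          qed
        qed
      qed
      have ci: "set (ES i) \<inter> covE P i = {}" by (rule cands_D(6)[OF Pi(1)[OF i1 ik']])
      have "(cv, ce) \<in> cands E ends p P i"
      proof (rule cands_I)
        show "is_path E ends cv ce" by (rule cpath)
        show "hd cv \<in> covV P i" using chd ucov by simp
        show "last cv \<in> covV P i" using clast wcov by simp
        show "p (last cv) \<le> p (hd cv)" using chd clast D2 by simp
        show "cv ! j \<notin> covV P i" if jj: "0 < j" "j < length ce" for j
        proof
          assume jc: "cv ! j \<in> covV P i"
          have "cv ! j \<in> set cv" using jj cl by simp
          then have "cv ! j = u \<or> cv ! j = w" using uw_cov jc by blast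
          then show False
          proof
            assume "cv ! j = u"
            then have "cv ! j = cv ! 0" using cv0 by simp
            then have "j = 0" using cd jj cl by (simp add: nth_eq_iff_index_eq)
            then show False using jj by simp
          next
            assume "cv ! j = w"
            then have "cv ! j = cv ! length ce" using cvn by simp
            then have "j = length ce" using cd jj cl by (simp add: nth_eq_iff_index_eq)
            then show False using jj by simp
          qed
        qed
        show "set ce \<inter> covE P i = {}"
          using psub ssub ci qE esub2 unfolding ce_def by auto
      qed
      then have cc: "(cv, ce) \<in> cands E ends p P i" .
      have "fval L p (cv, ce) \<le> F i" by (rule Pi(2)[OF i1 ik' cc])
      then have eq: "fval L p (cv, ce) = F i" using fC by simp
      have "F i \<noteq> 0" using eq fCpos by simp
      then have "(cv, ce) = P i" using Pi(3)[OF i1 ik' _ cc eq] by simp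
      then have "set ce = set (ES i)" by (metis snd_conv)
      then show False using nosame qsubC by simp
    qed
  qed
qed


lemma dec: assumes "i < k" "0 < F i" shows "F (Suc i) < F i"
proof (rule ccontr)
  assume "\<not> F (Suc i) < F i"
  then have "F i \<le> F (Suc i)" by simp
  moreover have "0 < F (Suc i)" using calculation assms(2) by simp
  ultimately show False using step[OF assms(1)] by simp
qed

lemma zero_step: assumes "i < k" "F i = 0" shows "F (Suc i) = 0"
proof (rule ccontr)
  assume "F (Suc i) \<noteq> 0"
  moreover have "0 \<le> F (Suc i)" using F_nonneg assms(1) by simp
  ultimately have "0 < F (Suc i)" by simp
  moreover have "F i \<le> F (Suc i)" using calculation assms(2) by simp
  ultimately show False using step[OF assms(1)] by simp
qed

lemma zeros: assumes "m \<le> n" "n \<le> k" "F m = 0" shows "F n = 0"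
  using assms
proof (induction n rule: dec_induct)
  case base then show ?case by simp
next
  case (step n) then show ?case using zero_step[of n] by simp
qed

lemma pos_down: assumes "n \<le> k" "0 < F n" "m \<le> n" shows "0 < F m"
proof (rule ccontr)
  assume "\<not> 0 < F m"
  then have "F m = 0" using F_nonneg[of m] assms by simp
  then have "F n = 0" using zeros[OF assms(3) assms(1)] by simp
  then show False using assms(2) by simp
qed

lemma conclusion: "\<exists>i0\<le>k. (\<forall>i<i0. fval L p (P i) > fval L p (P (Suc i))) \<and>
                 fval L p (P i0) > 0 \<and>
                 (\<forall>i. i0 < i \<and> i \<le> k \<longrightarrow> fval L p (P i) = 0)"
proof -
  define S where "S = {i. i \<le> k \<and> 0 < F i}"
  have fin: "finite S" unfolding S_def by simp
  have "0 \<in> S" unfolding S_def using F0 by simp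
  then have ne: "S \<noteq> {}" by blast
  define i0 where "i0 = Max S"
  have i0S: "i0 \<in> S" unfolding i0_def using fin ne by (rule Max_in)
  have i0max: "j \<le> i0" if "j \<in> S" for j unfolding i0_def using fin that by (rule Max_ge)
  have i0k: "i0 \<le> k" and i0p: "0 < F i0" using i0S unfolding S_def by simp_all
  have A: "\<forall>i<i0. F i > F (Suc i)"
  proof (intro allI impI)
    fix i assume ii: "i < i0"
    have "0 < F i" using pos_down[OF i0k i0p] ii by simp
    then show "F i > F (Suc i)" using dec[of i] ii i0k by simp
  qed
  have B: "\<forall>i. i0 < i \<and> i \<le> k \<longrightarrow> F i = 0"
  proof (intro allI impI)
    fix i assume ii: "i0 < i \<and> i \<le> k"
    then have "i \<notin> S" using i0max by fastforce
    then have "\<not> 0 < F i" using ii unfolding S_def by simp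
    then show "F i = 0" using F_nonneg[of i] ii by simp
  qed
  show ?thesis using i0k A i0p B by blast
qed

end

theorem mainTheorem13:
  fixes N :: "'v set" and E :: "'e set" and ends :: "'e \<Rightarrow> 'v set" and L :: "'e \<Rightarrow> real"
    and s0 s1 :: 'v and k :: nat and P :: "nat \<Rightarrow> 'v list \<times> 'e list" and p :: "'v \<Rightarrow> real"
  assumes "wf_graph N E ends L" and "connected_graph N E ends"
    and "s0 \<in> N" and "s1 \<in> N" and "s0 \<noteq> s1"
    and "path_decomp N E ends L s0 s1 k P p"
  shows "\<exists>i0\<le>k. (\<forall>i<i0. fval L p (P i) > fval L p (P (Suc i))) \<and>
                 fval L p (P i0) > 0 \<and>
                 (\<forall>i. i0 < i \<and> i \<le> k \<longrightarrow> fval L p (P i) = 0)"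
proof -
  interpret PD N E ends L s0 s1 k P p using assms(1) assms(6) by (rule PD.intro)
  show ?thesis by (rule conclusion)
qed


end
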